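(* Let $F$ be a Fourier matrix of size $N$ whose indexing group $I_F$ is cyclic. Then $h^{FF}_\rho=\rho$ for every automorphism $\rho$ of $I_F$, and the set of pairs $(P,R)$ of $N\times N$ permutation matrices satisfying $PFR^{-1}=F$ equals $\{(P_\rho,P_\rho^T):\ \rho\in\mathrm{Aut}(I_F)\}$.
   Context: For $n\ge1$, $F_n$ is the $n\times n$ matrix with rows and columns indexed by $\mathbb Z_n$ and entries $e^{2\pi i\,\tilde i\tilde j/n}$. A Fourier matrix is $F=F_{N_1}\otimes\cdots\otimes F_{N_r}$ of size $N=N_1\cdots N_r$, indexed by $I_F=\mathbb Z_{N_1}\times\cdots\times\mathbb Z_{N_r}$ with $F_{i,j}=\prod_x(F_{N_x})_{i_x,j_x}$; group indices correspond to ordinary indices via lexicographic order. For a bijection $\rho:I_F\to I_F$, $P_\rho$ is the permutation matrix with $(P_\rho)_{i,\rho(i)}=1$. For an automorphism $\rho$ of $I_F$, $h^{FF}_\rho:I_F\to I_F$ is the unique bijection with $F_{\rho(i),j}=F_{i,h^{FF}_\rho(j)}$ for all $i,j\in I_F$. *)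

theory Defs
  imports Complex_Main "Jordan_Normal_Form.Matrix"
begin

definition I_F :: "nat list \<Rightarrow> nat list set" where
  "I_F Ns = {t. length t = length Ns \<and> (\<forall>x<length Ns. t ! x < Ns ! x)}"

definition tadd :: "nat list \<Rightarrow> nat list \<Rightarrow> nat list \<Rightarrow> nat list" where
  "tadd Ns a b = map (\<lambda>x. (a ! x + b ! x) mod (Ns ! x)) [0..<length Ns]"

definition tsmul :: "nat list \<Rightarrow> nat \<Rightarrow> nat list \<Rightarrow> nat list" where
  "tsmul Ns n g = map (\<lambda>x. (n * g ! x) mod (Ns ! x)) [0..<length Ns]"

definition cyclic_I :: "nat list \<Rightarrow> bool" where
  "cyclic_I Ns = (\<exists>g\<in>I_F Ns. \<forall>a\<in>I_F Ns. \<exists>n. a = tsmul Ns n g)"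

definition is_aut :: "nat list \<Rightarrow> (nat list \<Rightarrow> nat list) \<Rightarrow> bool" where
  "is_aut Ns \<rho> = (bij_betw \<rho> (I_F Ns) (I_F Ns) \<and>
     (\<forall>a\<in>I_F Ns. \<forall>b\<in>I_F Ns. \<rho> (tadd Ns a b) = tadd Ns (\<rho> a) (\<rho> b)))"

definition Fent :: "nat list \<Rightarrow> nat list \<Rightarrow> nat list \<Rightarrow> complex" where
  "Fent Ns i j = (\<Prod>x<length Ns. exp (2 * of_real pi * \<i> * of_nat (i ! x * j ! x) / of_nat (Ns ! x)))"

text \<open>Lexicographic correspondence: ordinary index k to group index.\<close>
definition tup :: "nat list \<Rightarrow> nat \<Rightarrow> nat list" where
  "tup Ns k = map (\<lambda>x. (k div prod_list (drop (Suc x) Ns)) mod (Ns ! x)) [0..<length Ns]"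

definition fourier_mat :: "nat list \<Rightarrow> complex mat" where
  "fourier_mat Ns = mat (prod_list Ns) (prod_list Ns) (\<lambda>(k, l). Fent Ns (tup Ns k) (tup Ns l))"

definition perm_mat_of :: "nat list \<Rightarrow> (nat list \<Rightarrow> nat list) \<Rightarrow> complex mat" where
  "perm_mat_of Ns \<rho> = mat (prod_list Ns) (prod_list Ns)
     (\<lambda>(k, l). if tup Ns l = \<rho> (tup Ns k) then 1 else 0)"

definition is_perm_mat :: "nat \<Rightarrow> complex mat \<Rightarrow> bool" where
  "is_perm_mat n P = (P \<in> carrier_mat n n \<and> (\<exists>\<sigma>. \<sigma> permutes {..<n} \<and>
     (\<forall>i<n. \<forall>j<n. P $$ (i, j) = (if \<sigma> i = j then 1 else 0))))"

definition mat_inv :: "complex mat \<Rightarrow> complex mat" where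
  "mat_inv R = (SOME R'. R' \<in> carrier_mat (dim_row R) (dim_row R) \<and> inverts_mat R R' \<and> inverts_mat R' R)"

text \<open>h^{FF}_rho: the unique bijection of I_F with F_{rho i, j} = F_{i, h j};
  normalised to be the identity outside I_F so that it is unique as a HOL function.\<close>
definition hFF :: "nat list \<Rightarrow> (nat list \<Rightarrow> nat list) \<Rightarrow> nat list \<Rightarrow> nat list" where
  "hFF Ns \<rho> = (THE h. bij_betw h (I_F Ns) (I_F Ns) \<and> (\<forall>j. j \<notin> I_F Ns \<longrightarrow> h j = j) \<and>
     (\<forall>i\<in>I_F Ns. \<forall>j\<in>I_F Ns. Fent Ns (\<rho> i) j = Fent Ns i (h j)))"

end

theory Submission
  imports Defs
begin


lemma tup_Cons: "tup (n#Ns) k = ((k div prod_list Ns) mod n) # tup Ns k"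
  unfolding tup_def by (simp only: length_Cons map_upt_Suc) (simp del: upt_Suc)

lemma tup_Nil: "tup [] k = []"
  unfolding tup_def by simp

lemma tup_shift: "tup Ns (a * prod_list Ns + b) = tup Ns b"
proof (induction Ns arbitrary: a)
  case Nil
  then show ?case by (simp add: tup_Nil)
next
  case (Cons n Ns)
  let ?P = "prod_list Ns"
  have IH: "tup Ns ((a*n) * ?P + b) = tup Ns b" by (rule Cons.IH)
  have h: "(a * (n * ?P) + b) div ?P mod n = b div ?P mod n"
  proof (cases "?P = 0")
    case True then show ?thesis by simp
  next
    case False
    then have "(a * (n * ?P) + b) div ?P = a*n + b div ?P"
      by (metis add.commute div_mult_self1 mult.assoc mult.commute)
    then show ?thesis by (metis mod_mult_self3)
  qed
  show ?case using IH h by (simp add: tup_Cons mult.assoc)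
qed

lemma I_F_Nil: "I_F [] = {[]}"
  unfolding I_F_def by auto

lemma I_F_Cons: "t \<in> I_F (n#Ns) \<longleftrightarrow> (\<exists>a t'. t = a # t' \<and> a < n \<and> t' \<in> I_F Ns)"
proof (cases t)
  case Nil then show ?thesis by (simp add: I_F_def)
next
  case (Cons a t')
  have "(\<forall>x<length (n # Ns). t ! x < (n # Ns) ! x) \<longleftrightarrow> a < n \<and> (\<forall>x<length Ns. t' ! x < Ns ! x)"
    using Cons by (auto simp: less_Suc_eq_0_disj)
  then show ?thesis using Cons by (auto simp: I_F_def)
qed

lemma tup_bij:
  assumes "\<forall>x<length Ns. Ns ! x \<ge> 1"
  shows "bij_betw (tup Ns) {..<prod_list Ns} (I_F Ns)"
  using assms
proof (induction Ns)
  case Nil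
  then show ?case by (simp add: bij_betw_def tup_Nil I_F_Nil lessThan_Suc)
next
  case (Cons n Ns)
  let ?P = "prod_list Ns"
  have n1: "n \<ge> 1" using Cons.prems by force
  have pr: "\<forall>x<length Ns. Ns ! x \<ge> 1" using Cons.prems by force
  have IH: "bij_betw (tup Ns) {..<?P} (I_F Ns)" using Cons.IH pr by blast
  have P0: "?P > 0" using pr by (induction Ns) (force simp: nth_Cons)+
  have dec: "tup (n#Ns) k = (k div ?P) # tup Ns (k mod ?P)" if "k < n * ?P" for k
  proof -
    have "k div ?P < n" using that P0 by (simp add: div_less_iff_less_mult mult.commute)
    moreover have "tup Ns k = tup Ns (k mod ?P)"
      using tup_shift[of Ns "k div ?P" "k mod ?P"] by simp
    ultimately show ?thesis by (simp add: tup_Cons)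
  qed
  show ?case unfolding bij_betw_def
  proof
    show "inj_on (tup (n # Ns)) {..<prod_list (n # Ns)}"
    proof (rule inj_onI)
      fix k l assume k: "k \<in> {..<prod_list (n # Ns)}" and l: "l \<in> {..<prod_list (n # Ns)}"
        and e: "tup (n # Ns) k = tup (n # Ns) l"
      then have "k div ?P = l div ?P" "tup Ns (k mod ?P) = tup Ns (l mod ?P)" using dec by auto
      moreover have "k mod ?P < ?P" "l mod ?P < ?P" using P0 by auto
      ultimately have "k mod ?P = l mod ?P" using IH unfolding bij_betw_def inj_on_def by blast
      then show "k = l" using \<open>k div ?P = l div ?P\<close> by (metis div_mult_mod_eq)
    qed
  next
    show "tup (n # Ns) ` {..<prod_list (n # Ns)} = I_F (n # Ns)"
    proof
      show "tup (n # Ns) ` {..<prod_list (n # Ns)} \<subseteq> I_F (n # Ns)"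
      proof
        fix t assume "t \<in> tup (n # Ns) ` {..<prod_list (n # Ns)}"
        then obtain k where k: "k < n * ?P" "t = tup (n # Ns) k" by auto
        have "k div ?P < n" using k P0 by (simp add: div_less_iff_less_mult mult.commute)
        moreover have "tup Ns (k mod ?P) \<in> I_F Ns" using IH P0 unfolding bij_betw_def by auto
        ultimately show "t \<in> I_F (n # Ns)" using k dec by (simp add: I_F_Cons)
      qed
    next
      show "I_F (n # Ns) \<subseteq> tup (n # Ns) ` {..<prod_list (n # Ns)}"
      proof
        fix t assume "t \<in> I_F (n # Ns)"
        then obtain a t' where t: "t = a # t'" "a < n" "t' \<in> I_F Ns" by (auto simp: I_F_Cons)
        then obtain b where b: "b < ?P" "t' = tup Ns b" using IH unfolding bij_betw_def by auto
        define k where "k = a * ?P + b"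
        have "(a+1) * ?P \<le> n * ?P" using t by (intro mult_le_mono1) simp
        then have kl: "k < n * ?P" unfolding k_def using b by simp
        have "k div ?P = a" "k mod ?P = b" unfolding k_def using b P0 by auto
        then have "tup (n#Ns) k = t" using dec[OF kl] t b by simp
        then show "t \<in> tup (n # Ns) ` {..<prod_list (n # Ns)}" using kl by force
      qed
    qed
  qed
qed



abbreviation "ee (N::nat) (a::nat) \<equiv> exp (2 * of_real pi * \<i> * of_nat a / of_nat N)"

lemma ee_mod: "ee N ((a mod N) * b) = ee N (a * b)"
proof (cases "N = 0")
  case True then show ?thesis by simp
next
  case False
  have ab: "a * b = (a mod N) * b + N * ((a div N) * b)"
    by (metis add_mult_distrib mult.assoc mult.commute mod_div_mult_eq)
  have "2 * of_real pi * \<i> * of_nat (a*b) / of_nat N =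
        2 * of_real pi * \<i> * of_nat ((a mod N) * b) / of_nat N + of_nat ((a div N) * b) * (2 * of_real pi * \<i>)"
    using False by (subst ab) (simp add: field_simps)
  then show ?thesis by (simp only: exp_add exp_of_nat_mult exp_two_pi_i) simp
qed

lemma ee_mult: "ee N (m * a) = ee N a ^ m"
proof -
  have "2 * of_real pi * \<i> * of_nat (m*a) / of_nat N = of_nat m * (2 * of_real pi * \<i> * of_nat a / of_nat N)"
    by simp
  then show ?thesis by (simp only: exp_of_nat_mult)
qed

lemma ee_inj:
  assumes "a < N" "b < N" "ee N a = ee N b"
  shows "a = b"
proof -
  have N0: "real N > 0" using assms by simp
  define z where "z = complex_of_real (2*pi*(real a - real b)/real N) * \<i>"
  have "2 * of_real pi * \<i> * of_nat a / of_nat N = z + 2 * of_real pi * \<i> * of_nat b / of_nat N"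
    unfolding z_def using N0 by (simp add: field_simps)
  then have "exp z * ee N b = ee N b" using assms(3) by (simp add: exp_add)
  then have "exp z = 1" by simp
  then have "Re (exp z) = 1" by simp
  then have "cos (2*pi*(real a - real b)/real N) = 1" unfolding z_def by (simp add: Re_exp)
  then obtain n :: int where n: "2*pi*(real a - real b)/real N = n * 2 * pi" by (auto simp: cos_one_2pi_int)
  then have "pi * (2*(real a - real b)) = pi * (2*(of_int n * real N))" using N0 by (simp add: field_simps)
  then have e: "real a - real b = of_int n * real N" by simp
  have "n = 0"
  proof (rule ccontr)
    assume "n \<noteq> 0"
    then have "1 \<le> \<bar>n\<bar>" by linarith
    then have "(1::real) \<le> \<bar>of_int n\<bar>" by (metis of_int_1_le_iff of_int_abs)
    then have "real N \<le> \<bar>of_int n\<bar> * real N" using mult_right_mono[of 1 "\<bar>of_int n\<bar>" "real N"] N0 by simp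
    then have "real N \<le> \<bar>real a - real b\<bar>" using e N0 by (simp add: abs_mult)
    then show False using assms by linarith
  qed
  then show ?thesis using e by simp
qed

lemma Fent_sym: "Fent Ns i j = Fent Ns j i"
  unfolding Fent_def by (simp add: mult.commute)

lemma tsmul_nth: "x < length Ns \<Longrightarrow> tsmul Ns m g ! x = (m * g ! x) mod (Ns ! x)"
  unfolding tsmul_def by simp

lemma tadd_nth: "x < length Ns \<Longrightarrow> tadd Ns a b ! x = (a ! x + b ! x) mod (Ns ! x)"
  unfolding tadd_def by simp

lemma Fent_tsmul: "Fent Ns (tsmul Ns m i) j = Fent Ns i j ^ m"
  unfolding Fent_def prod_power_distrib
proof (rule prod.cong)
  fix x assume "x \<in> {..<length Ns}"
  then have "tsmul Ns m i ! x * j ! x = ((m * i!x) mod (Ns!x)) * j!x"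
    by (simp add: tsmul_nth)
  then have "ee (Ns!x) (tsmul Ns m i ! x * j ! x) = ee (Ns!x) ((m * i!x) * j!x)"
    by (simp only: ee_mod)
  also have "\<dots> = ee (Ns!x) (i!x * j!x) ^ m" by (metis mult.assoc ee_mult)
  finally show "ee (Ns!x) (tsmul Ns m i ! x * j ! x) = ee (Ns!x) (i!x * j!x) ^ m" .
qed simp

lemma Fent_tsmul2: "Fent Ns i (tsmul Ns m j) = Fent Ns i j ^ m"
  by (metis Fent_sym Fent_tsmul)

definition ev :: "nat list \<Rightarrow> nat \<Rightarrow> nat list" where
  "ev Ns x = map (\<lambda>y. if y = x then 1 else 0) [0..<length Ns]"

lemma Fent_ev: "x < length Ns \<Longrightarrow> Fent Ns (ev Ns x) a = ee (Ns!x) (a!x)"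
  unfolding Fent_def ev_def
  by (subst prod.cong[OF refl, where h = "\<lambda>y. if y = x then ee (Ns!x) (a!x) else 1"]) auto

lemma Fent_nondeg:
  assumes "a \<in> I_F Ns" "b \<in> I_F Ns" "\<forall>x<length Ns. Ns ! x \<ge> 1"
    and "\<And>i. i \<in> I_F Ns \<Longrightarrow> Fent Ns i a = Fent Ns i b"
  shows "a = b"
proof (rule nth_equalityI)
  show "length a = length b" using assms(1,2) by (simp add: I_F_def)
next
  fix x assume "x < length a"
  then have x: "x < length Ns" using assms(1) by (simp add: I_F_def)
  have ax: "a!x < Ns!x" "b!x < Ns!x" using assms(1,2) x by (auto simp: I_F_def)
  show "a ! x = b ! x"
  proof (cases "Ns!x = 1")
    case True then show ?thesis using ax by simp
  next
    case False
    then have "Ns!x \<ge> 2" using assms(3) x by force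
    then have "ev Ns x \<in> I_F Ns" unfolding I_F_def ev_def using assms(3) by auto
    then have "Fent Ns (ev Ns x) a = Fent Ns (ev Ns x) b" using assms(4) by blast
    then have "ee (Ns!x) (a!x) = ee (Ns!x) (b!x)" using Fent_ev[OF x] by simp
    then show ?thesis using ee_inj ax by blast
  qed
qed



definition zt :: "nat list \<Rightarrow> nat list" where "zt Ns = replicate (length Ns) 0"

lemma len_tsmul[simp]: "length (tsmul Ns m g) = length Ns" unfolding tsmul_def by simp
lemma len_tadd[simp]: "length (tadd Ns a b) = length Ns" unfolding tadd_def by simp

lemma tsmul_I: "\<forall>x<length Ns. Ns ! x \<ge> 1 \<Longrightarrow> tsmul Ns m g \<in> I_F Ns"
  unfolding I_F_def by (auto simp: tsmul_nth)

lemma tadd_I: "\<forall>x<length Ns. Ns ! x \<ge> 1 \<Longrightarrow> tadd Ns a b \<in> I_F Ns"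
  unfolding I_F_def by (auto simp: tadd_nth)

lemma zt_I: "\<forall>x<length Ns. Ns ! x \<ge> 1 \<Longrightarrow> zt Ns \<in> I_F Ns"
  unfolding I_F_def zt_def by auto

lemma tsmul_tsmul: "tsmul Ns n (tsmul Ns m g) = tsmul Ns (n*m) g"
  by (rule nth_equalityI) (auto simp: tsmul_nth mod_mult_right_eq mult.assoc)

lemma tsmul_0: "tsmul Ns 0 g = zt Ns"
  by (rule nth_equalityI) (auto simp: tsmul_nth zt_def)

lemma tsmul_Suc: "tsmul Ns (Suc n) g = tadd Ns g (tsmul Ns n g)"
  by (rule nth_equalityI) (auto simp: tsmul_nth tadd_nth mod_add_right_eq)

lemma tadd_zt: "tadd Ns (zt Ns) (zt Ns) = zt Ns"
  by (rule nth_equalityI) (auto simp: tadd_nth zt_def)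

lemma mod_double:
  fixes c N :: nat
  assumes "c < N" "(c + c) mod N = c"
  shows "c = 0"
proof (cases "c + c < N")
  case True
  then have "(c + c) mod N = c + c" by simp
  then show ?thesis using assms by simp
next
  case False
  then have "(c + c) mod N = (c + c - N) mod N" by (simp add: le_mod_geq)
  also have "\<dots> = c + c - N" using assms(1) False by simp
  finally show ?thesis using assms by simp
qed

lemma aut_zt:
  assumes "\<forall>x<length Ns. Ns ! x \<ge> 1" "is_aut Ns \<rho>"
  shows "\<rho> (zt Ns) = zt Ns"
proof -
  let ?c = "\<rho> (zt Ns)"
  have cI: "?c \<in> I_F Ns" using assms zt_I unfolding is_aut_def bij_betw_def by blast
  have hom: "\<forall>a\<in>I_F Ns. \<forall>b\<in>I_F Ns. \<rho> (tadd Ns a b) = tadd Ns (\<rho> a) (\<rho> b)"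
    using assms(2) by (simp add: is_aut_def)
  have "\<rho> (tadd Ns (zt Ns) (zt Ns)) = tadd Ns ?c ?c" using hom zt_I[OF assms(1)] by blast
  then have "?c = tadd Ns ?c ?c" by (simp add: tadd_zt)
  show ?thesis
  proof (rule nth_equalityI)
    show "length ?c = length (zt Ns)" using cI by (simp add: I_F_def zt_def)
  next
    fix x assume "x < length ?c"
    then have x: "x < length Ns" using cI by (simp add: I_F_def)
    from \<open>?c = tadd Ns ?c ?c\<close> have "tadd Ns ?c ?c ! x = ?c ! x" by (rule arg_cong[symmetric])
    then have "(?c!x + ?c!x) mod (Ns!x) = ?c ! x" by (simp only: tadd_nth[OF x])
    moreover have "?c!x < Ns!x" using cI x by (simp add: I_F_def)
    ultimately have "?c ! x = 0" by (rule mod_double[rotated])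
    then show "?c ! x = zt Ns ! x" using x by (simp add: zt_def)
  qed
qed

lemma aut_tsmul:
  assumes "\<forall>x<length Ns. Ns ! x \<ge> 1" "is_aut Ns \<rho>" "g \<in> I_F Ns"
  shows "\<rho> (tsmul Ns n g) = tsmul Ns n (\<rho> g)"
proof (induction n)
  case 0
  then show ?case using aut_zt[OF assms(1,2)] by (simp add: tsmul_0)
next
  case (Suc n)
  have hom: "\<forall>a\<in>I_F Ns. \<forall>b\<in>I_F Ns. \<rho> (tadd Ns a b) = tadd Ns (\<rho> a) (\<rho> b)"
    using assms(2) by (simp add: is_aut_def)
  have "\<rho> (tsmul Ns (Suc n) g) = tadd Ns (\<rho> g) (\<rho> (tsmul Ns n g))"
    unfolding tsmul_Suc using hom assms(3) tsmul_I[OF assms(1)] by blast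
  then show ?case using Suc by (simp add: tsmul_Suc)
qed

lemma aut_is_tsmul:
  assumes "\<forall>x<length Ns. Ns ! x \<ge> 1" "cyclic_I Ns" "is_aut Ns \<rho>"
  shows "\<exists>m. \<forall>a\<in>I_F Ns. \<rho> a = tsmul Ns m a"
proof -
  obtain g where g: "g \<in> I_F Ns" "\<forall>a\<in>I_F Ns. \<exists>n. a = tsmul Ns n g"
    using assms(2) unfolding cyclic_I_def by (elim bexE)
  have bij: "bij_betw \<rho> (I_F Ns) (I_F Ns)" using assms(3) by (simp add: is_aut_def)
  have "\<rho> g \<in> I_F Ns" by (rule bspec[OF bij_betwE[OF bij] g(1)])
  then have "\<exists>m. \<rho> g = tsmul Ns m g" by (rule bspec[OF g(2)])
  then obtain m where m: "\<rho> g = tsmul Ns m g" by (elim exE)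
  have "\<rho> a = tsmul Ns m a" if "a \<in> I_F Ns" for a
  proof -
    have "\<exists>n. a = tsmul Ns n g" using that by (rule bspec[OF g(2)])
    then obtain n where n: "a = tsmul Ns n g" by (elim exE)
    have "\<rho> a = tsmul Ns n (\<rho> g)" unfolding n by (rule aut_tsmul[OF assms(1,3) g(1)])
    also have "\<dots> = tsmul Ns n (tsmul Ns m g)" by (simp only: m)
    also have "\<dots> = tsmul Ns m a" unfolding n tsmul_tsmul by (simp only: mult.commute)
    finally show ?thesis .
  qed
  then show ?thesis by blast
qed

lemma aut_Fent:
  assumes "\<forall>x<length Ns. Ns ! x \<ge> 1" "cyclic_I Ns" "is_aut Ns \<rho>" "i \<in> I_F Ns" "j \<in> I_F Ns"
  shows "Fent Ns (\<rho> i) j = Fent Ns i (\<rho> j)"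
proof -
  obtain m where m: "\<forall>a\<in>I_F Ns. \<rho> a = tsmul Ns m a" using aut_is_tsmul[OF assms(1-3)] by blast
  have "Fent Ns (\<rho> i) j = Fent Ns (tsmul Ns m i) j" using m assms(4) by simp
  also have "\<dots> = Fent Ns i j ^ m" by (rule Fent_tsmul)
  also have "\<dots> = Fent Ns i (tsmul Ns m j)" by (rule Fent_tsmul2[symmetric])
  also have "\<dots> = Fent Ns i (\<rho> j)" using m assms(5) by simp
  finally show ?thesis .
qed

lemma part1:
  assumes "\<forall>x<length Ns. Ns ! x \<ge> 1" "cyclic_I Ns" "is_aut Ns \<rho>" "j \<in> I_F Ns"
  shows "hFF Ns \<rho> j = \<rho> j"
proof -
  define h0 where "h0 = (\<lambda>j. if j \<in> I_F Ns then \<rho> j else j)"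
  let ?Q = "\<lambda>h. bij_betw h (I_F Ns) (I_F Ns) \<and> (\<forall>j. j \<notin> I_F Ns \<longrightarrow> h j = j) \<and>
     (\<forall>i\<in>I_F Ns. \<forall>j\<in>I_F Ns. Fent Ns (\<rho> i) j = Fent Ns i (h j))"
  have bij: "bij_betw \<rho> (I_F Ns) (I_F Ns)" using assms(3) unfolding is_aut_def by blast
  have "?Q h0"
  proof (intro conjI)
    show "bij_betw h0 (I_F Ns) (I_F Ns)" using bij by (rule bij_betw_cong[THEN iffD1, rotated]) (simp add: h0_def)
    show "\<forall>j. j \<notin> I_F Ns \<longrightarrow> h0 j = j" by (simp add: h0_def)
    show "\<forall>i\<in>I_F Ns. \<forall>j\<in>I_F Ns. Fent Ns (\<rho> i) j = Fent Ns i (h0 j)"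
      using aut_Fent[OF assms(1-3)] by (simp add: h0_def)
  qed
  moreover have "h = h0" if "?Q h" for h
  proof
    fix j show "h j = h0 j"
    proof (cases "j \<in> I_F Ns")
      case False then show ?thesis using that by (simp add: h0_def)
    next
      case True
      have "h j \<in> I_F Ns" using that True unfolding bij_betw_def by blast
      moreover have "\<rho> j \<in> I_F Ns" using bij True unfolding bij_betw_def by blast
      moreover have "\<And>i. i \<in> I_F Ns \<Longrightarrow> Fent Ns i (h j) = Fent Ns i (\<rho> j)"
        using that True aut_Fent[OF assms(1-3)] by metis
      ultimately have "h j = \<rho> j" using Fent_nondeg[OF _ _ assms(1)] by blast
      then show ?thesis using True by (simp add: h0_def)
    qed
  qed
  ultimately have "hFF Ns \<rho> = h0" unfolding hFF_def by (rule the_equality)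
  then show ?thesis using assms(4) by (simp add: h0_def)
qed



lemma tsmul_tadd: "tsmul Ns m (tadd Ns a b) = tadd Ns (tsmul Ns m a) (tsmul Ns m b)"
proof (rule nth_equalityI)
  fix x assume "x < length (tsmul Ns m (tadd Ns a b))"
  then have x: "x < length Ns" by simp
  have "(m * ((a!x + b!x) mod Ns!x)) mod Ns!x = (m * (a!x + b!x)) mod Ns!x"
    by (simp add: mod_mult_right_eq)
  also have "\<dots> = (m * a!x + m * b!x) mod Ns!x" by (simp add: distrib_left)
  also have "\<dots> = ((m * a!x) mod Ns!x + (m * b!x) mod Ns!x) mod Ns!x" by (simp add: mod_add_eq)
  finally show "tsmul Ns m (tadd Ns a b) ! x = tadd Ns (tsmul Ns m a) (tsmul Ns m b) ! x"
    using x by (simp add: tsmul_nth tadd_nth)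
qed simp

lemma group_lemma:
  assumes N1: "\<forall>x<length Ns. Ns ! x \<ge> 1" and cyc: "cyclic_I Ns"
    and ba: "bij_betw \<alpha> (I_F Ns) (I_F Ns)" and bb: "bij_betw \<beta> (I_F Ns) (I_F Ns)"
    and F: "\<And>i j. i \<in> I_F Ns \<Longrightarrow> j \<in> I_F Ns \<Longrightarrow> Fent Ns (\<alpha> i) (\<beta> j) = Fent Ns i j"
  shows "\<exists>m. (\<forall>a\<in>I_F Ns. \<alpha> a = tsmul Ns m a) \<and> (\<forall>j\<in>I_F Ns. \<alpha> (\<beta> j) = j)"
proof -
  obtain g where g: "g \<in> I_F Ns" "\<forall>a\<in>I_F Ns. \<exists>n. a = tsmul Ns n g"
    using cyc unfolding cyclic_I_def by (elim bexE)
  have aI: "\<alpha> a \<in> I_F Ns" if "a \<in> I_F Ns" for a by (rule bspec[OF bij_betwE[OF ba] that])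
  have bI: "\<beta> a \<in> I_F Ns" if "a \<in> I_F Ns" for a by (rule bspec[OF bij_betwE[OF bb] that])
  have bsurj: "\<exists>j\<in>I_F Ns. j' = \<beta> j" if "j' \<in> I_F Ns" for j'
    using bb that unfolding bij_betw_def by (metis imageE)
  have hom: "\<alpha> (tsmul Ns n g) = tsmul Ns n (\<alpha> g)" for n
  proof (rule Fent_nondeg[OF aI[OF tsmul_I[OF N1]] tsmul_I[OF N1] N1])
    fix j' assume j': "j' \<in> I_F Ns"
    obtain j where j: "j \<in> I_F Ns" "j' = \<beta> j" using bsurj[OF j'] by (elim bexE)
    have "Fent Ns (\<alpha> (tsmul Ns n g)) j' = Fent Ns (tsmul Ns n g) j"
      unfolding j(2) by (rule F[OF tsmul_I[OF N1] j(1)])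
    also have "\<dots> = Fent Ns g j ^ n" by (rule Fent_tsmul)
    also have "\<dots> = Fent Ns (\<alpha> g) j' ^ n" unfolding j(2) by (simp only: F[OF g(1) j(1)])
    also have "\<dots> = Fent Ns (tsmul Ns n (\<alpha> g)) j'" by (rule Fent_tsmul[symmetric])
    finally show "Fent Ns j' (\<alpha> (tsmul Ns n g)) = Fent Ns j' (tsmul Ns n (\<alpha> g))"
      by (simp only: Fent_sym)
  qed
  have "\<exists>m. \<alpha> g = tsmul Ns m g" by (rule bspec[OF g(2) aI[OF g(1)]])
  then obtain m where m: "\<alpha> g = tsmul Ns m g" by (elim exE)
  have am: "\<alpha> a = tsmul Ns m a" if "a \<in> I_F Ns" for a
  proof -
    have "\<exists>n. a = tsmul Ns n g" using that by (rule bspec[OF g(2)])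
    then obtain n where n: "a = tsmul Ns n g" by (elim exE)
    have "\<alpha> a = tsmul Ns n (\<alpha> g)" unfolding n by (rule hom)
    also have "\<dots> = tsmul Ns n (tsmul Ns m g)" by (simp only: m)
    also have "\<dots> = tsmul Ns m a" unfolding n tsmul_tsmul by (simp only: mult.commute)
    finally show ?thesis .
  qed
  have inv: "\<alpha> (\<beta> j) = j" if j: "j \<in> I_F Ns" for j
  proof (rule Fent_nondeg[OF aI[OF bI[OF j]] j N1])
    fix i assume i: "i \<in> I_F Ns"
    have "Fent Ns i (\<alpha> (\<beta> j)) = Fent Ns i (tsmul Ns m (\<beta> j))" by (simp only: am[OF bI[OF j]])
    also have "\<dots> = Fent Ns i (\<beta> j) ^ m" by (rule Fent_tsmul2)
    also have "\<dots> = Fent Ns (tsmul Ns m i) (\<beta> j)" by (rule Fent_tsmul[symmetric])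
    also have "\<dots> = Fent Ns (\<alpha> i) (\<beta> j)" by (simp only: am[OF i])
    also have "\<dots> = Fent Ns i j" by (rule F[OF i j])
    finally show "Fent Ns i (\<alpha> (\<beta> j)) = Fent Ns i j" .
  qed
  show ?thesis using am inv by blast
qed

lemma tsmul_aut:
  assumes N1: "\<forall>x<length Ns. Ns ! x \<ge> 1" and ba: "bij_betw \<alpha> (I_F Ns) (I_F Ns)"
    and am: "\<forall>a\<in>I_F Ns. \<alpha> a = tsmul Ns m a"
  shows "is_aut Ns \<alpha>"
  unfolding is_aut_def
proof (intro conjI ballI)
  show "bij_betw \<alpha> (I_F Ns) (I_F Ns)" by (rule ba)
  fix a b assume a: "a \<in> I_F Ns" and b: "b \<in> I_F Ns"
  have "\<alpha> (tadd Ns a b) = tsmul Ns m (tadd Ns a b)" by (rule bspec[OF am tadd_I[OF N1]])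
  also have "\<dots> = tadd Ns (tsmul Ns m a) (tsmul Ns m b)" by (rule tsmul_tadd)
  also have "\<dots> = tadd Ns (\<alpha> a) (\<alpha> b)" by (simp only: bspec[OF am a] bspec[OF am b])
  finally show "\<alpha> (tadd Ns a b) = tadd Ns (\<alpha> a) (\<alpha> b)" .
qed



definition PM :: "nat \<Rightarrow> (nat \<Rightarrow> nat) \<Rightarrow> complex mat" where
  "PM n \<sigma> = mat n n (\<lambda>(i,j). if \<sigma> i = j then 1 else 0)"

lemma PM_carrier[simp]: "PM n \<sigma> \<in> carrier_mat n n" "dim_row (PM n \<sigma>) = n" "dim_col (PM n \<sigma>) = n"
  unfolding PM_def by auto

lemma PM_index: "i < n \<Longrightarrow> j < n \<Longrightarrow> PM n \<sigma> $$ (i,j) = (if \<sigma> i = j then 1 else 0)"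
  unfolding PM_def by simp

lemma PM_cong: "(\<And>k. k < n \<Longrightarrow> \<sigma> k = \<sigma>' k) \<Longrightarrow> PM n \<sigma> = PM n \<sigma>'"
  by (rule eq_matI) (auto simp: PM_index)

lemma is_perm_mat_PM: "is_perm_mat n P \<longleftrightarrow> (\<exists>\<sigma>. \<sigma> permutes {..<n} \<and> P = PM n \<sigma>)"
proof
  assume "is_perm_mat n P"
  then obtain \<sigma> where s: "P \<in> carrier_mat n n" "\<sigma> permutes {..<n}"
     "\<forall>i<n. \<forall>j<n. P $$ (i, j) = (if \<sigma> i = j then 1 else 0)"
    unfolding is_perm_mat_def by blast
  have "P = PM n \<sigma>" using s by (intro eq_matI) (auto simp: PM_index)
  then show "\<exists>\<sigma>. \<sigma> permutes {..<n} \<and> P = PM n \<sigma>" using s by blast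
next
  assume "\<exists>\<sigma>. \<sigma> permutes {..<n} \<and> P = PM n \<sigma>"
  then show "is_perm_mat n P" unfolding is_perm_mat_def by (auto simp: PM_index)
qed

lemma mult_entry:
  assumes "i < dim_row A" "j < dim_col B" "dim_col A = dim_row B"
  shows "(A * B) $$ (i,j) = (\<Sum>k\<in>{0..<dim_row B}. A $$ (i,k) * B $$ (k,j))"
  using assms by (simp add: scalar_prod_def)

lemma PM_mult_left:
  assumes "\<sigma> permutes {..<n}" "A \<in> carrier_mat n m" "i < n" "j < m"
  shows "(PM n \<sigma> * A) $$ (i,j) = A $$ (\<sigma> i, j)"
proof -
  have si: "\<sigma> i < n" using permutes_in_image[OF assms(1), of i] assms(3) by simp
  have "(PM n \<sigma> * A) $$ (i,j) = (\<Sum>k\<in>{0..<n}. PM n \<sigma> $$ (i,k) * A $$ (k,j))"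
    using assms by (subst mult_entry) auto
  also have "\<dots> = (\<Sum>k\<in>{0..<n}. if \<sigma> i = k then A $$ (k,j) else 0)"
    using assms(3) by (intro sum.cong) (auto simp: PM_index)
  also have "\<dots> = A $$ (\<sigma> i, j)" using si by simp
  finally show ?thesis .
qed

lemma PM_mult_right:
  assumes "p permutes {..<n}" "A \<in> carrier_mat m n" "i < m" "j < n"
  shows "(A * PM n p) $$ (i,j) = A $$ (i, Hilbert_Choice.inv p j)"
proof -
  have si: "Hilbert_Choice.inv p j < n" using permutes_in_image[OF permutes_inv[OF assms(1)], of j] assms(4) by simp
  have "(A * PM n p) $$ (i,j) = (\<Sum>k\<in>{0..<n}. A $$ (i,k) * PM n p $$ (k,j))"
    using assms by (subst mult_entry) auto
  also have "\<dots> = (\<Sum>k\<in>{0..<n}. if k = Hilbert_Choice.inv p j then A $$ (i,k) else 0)"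
    using assms(4)
  proof (intro sum.cong refl)
    fix k assume "k \<in> {0..<n}"
    have "p k = j \<longleftrightarrow> k = Hilbert_Choice.inv p j"
      using assms(1) by (metis permutes_inverses(1) permutes_inverses(2))
    then show "A $$ (i,k) * PM n p $$ (k,j) = (if k = Hilbert_Choice.inv p j then A $$ (i,k) else 0)"
      using \<open>k \<in> {0..<n}\<close> assms(4) by (simp add: PM_index)
  qed
  also have "\<dots> = A $$ (i, Hilbert_Choice.inv p j)" using si by simp
  finally show ?thesis .
qed

lemma PM_inv_mult:
  assumes "\<sigma> permutes {..<n}"
  shows "PM n \<sigma> * PM n (Hilbert_Choice.inv \<sigma>) = 1\<^sub>m n"
proof (rule eq_matI)
  fix i j assume "i < dim_row (1\<^sub>m n :: complex mat)" "j < dim_col (1\<^sub>m n :: complex mat)"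
  then have ij: "i < n" "j < n" by auto
  have si: "\<sigma> i < n" using permutes_in_image[OF assms(1), of i] ij by simp
  have "(PM n \<sigma> * PM n (Hilbert_Choice.inv \<sigma>)) $$ (i,j) = PM n (Hilbert_Choice.inv \<sigma>) $$ (\<sigma> i, j)"
    using ij by (intro PM_mult_left[OF assms]) auto
  also have "\<dots> = (if i = j then 1 else 0)" using si ij by (simp add: PM_index permutes_inverses(2)[OF assms])
  finally show "(PM n \<sigma> * PM n (Hilbert_Choice.inv \<sigma>)) $$ (i,j) = 1\<^sub>m n $$ (i,j)" using ij by simp
qed auto

lemma mat_inv_PM:
  assumes "\<sigma> permutes {..<n}"
  shows "mat_inv (PM n \<sigma>) = PM n (Hilbert_Choice.inv \<sigma>)"
proof -
  have si: "Hilbert_Choice.inv \<sigma> permutes {..<n}" using assms by (rule permutes_inv)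
  have i1: "PM n \<sigma> * PM n (Hilbert_Choice.inv \<sigma>) = 1\<^sub>m n" by (rule PM_inv_mult[OF assms])
  have i2: "PM n (Hilbert_Choice.inv \<sigma>) * PM n \<sigma> = 1\<^sub>m n"
    using PM_inv_mult[OF si] assms by (simp add: permutes_inv_inv)
  show ?thesis unfolding mat_inv_def
  proof (rule some_equality)
    show "PM n (Hilbert_Choice.inv \<sigma>) \<in> carrier_mat (dim_row (PM n \<sigma>)) (dim_row (PM n \<sigma>)) \<and>
      inverts_mat (PM n \<sigma>) (PM n (Hilbert_Choice.inv \<sigma>)) \<and> inverts_mat (PM n (Hilbert_Choice.inv \<sigma>)) (PM n \<sigma>)"
      using i1 i2 by (simp add: inverts_mat_def)
  next
    fix R' assume "R' \<in> carrier_mat (dim_row (PM n \<sigma>)) (dim_row (PM n \<sigma>)) \<and>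
      inverts_mat (PM n \<sigma>) R' \<and> inverts_mat R' (PM n \<sigma>)"
    then have R': "R' \<in> carrier_mat n n" "R' * PM n \<sigma> = 1\<^sub>m n"
      by (auto simp: inverts_mat_def)
    have "R' = R' * (PM n \<sigma> * PM n (Hilbert_Choice.inv \<sigma>))" using i1 R'(1) by simp
    also have "\<dots> = (R' * PM n \<sigma>) * PM n (Hilbert_Choice.inv \<sigma>)" using assoc_mult_mat[OF R'(1) PM_carrier(1) PM_carrier(1)] by simp
    also have "\<dots> = PM n (Hilbert_Choice.inv \<sigma>)" using R'(2) by simp
    finally show "R' = PM n (Hilbert_Choice.inv \<sigma>)" .
  qed
qed

lemma transpose_PM:
  assumes "\<sigma> permutes {..<n}"
  shows "transpose_mat (PM n \<sigma>) = PM n (Hilbert_Choice.inv \<sigma>)"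
proof (rule eq_matI)
  fix i j assume "i < dim_row (PM n (Hilbert_Choice.inv \<sigma>))" "j < dim_col (PM n (Hilbert_Choice.inv \<sigma>))"
  then have ij: "i < n" "j < n" by auto
  have "\<sigma> j = i \<longleftrightarrow> Hilbert_Choice.inv \<sigma> i = j"
    using assms by (metis permutes_inverses(1) permutes_inverses(2))
  then show "transpose_mat (PM n \<sigma>) $$ (i, j) = PM n (Hilbert_Choice.inv \<sigma>) $$ (i, j)"
    using ij by (simp add: PM_index)
qed auto



locale FS =
  fixes Ns :: "nat list"
  assumes N1: "\<forall>x<length Ns. Ns ! x \<ge> 1" and cyc: "cyclic_I Ns"
begin

abbreviation "NN \<equiv> prod_list Ns"
abbreviation "T \<equiv> tup Ns"
abbreviation "Ti \<equiv> the_inv_into {..<NN} T"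
abbreviation "II \<equiv> I_F Ns"
abbreviation "FF \<equiv> fourier_mat Ns"

lemma bijT: "bij_betw T {..<NN} II" using tup_bij[OF N1] .

lemma TI: "k < NN \<Longrightarrow> T k \<in> II" using bij_betwE[OF bijT] by blast
lemma TiI: "t \<in> II \<Longrightarrow> Ti t < NN" using bij_betwE[OF bij_betw_the_inv_into[OF bijT]] by blast
lemma TTi: "t \<in> II \<Longrightarrow> T (Ti t) = t" using f_the_inv_into_f_bij_betw[OF bijT] by blast
lemma TiT: "k < NN \<Longrightarrow> Ti (T k) = k" using the_inv_into_f_f[OF bij_betw_imp_inj_on[OF bijT]] by blast
lemma T_inj: "k < NN \<Longrightarrow> l < NN \<Longrightarrow> T k = T l \<Longrightarrow> k = l" using TiT by metis

lemma FF_carrier: "FF \<in> carrier_mat NN NN" unfolding fourier_mat_def by simp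
lemma FF_index: "k < NN \<Longrightarrow> l < NN \<Longrightarrow> FF $$ (k,l) = Fent Ns (T k) (T l)"
  unfolding fourier_mat_def by simp

lemma key:
  assumes s: "\<sigma> permutes {..<NN}" and t: "\<tau> permutes {..<NN}"
  shows "(PM NN \<sigma> * FF * mat_inv (PM NN \<tau>) = FF) \<longleftrightarrow>
    (\<forall>k<NN. \<forall>l<NN. Fent Ns (T (\<sigma> k)) (T (\<tau> l)) = Fent Ns (T k) (T l))"
proof -
  have ti: "Hilbert_Choice.inv \<tau> permutes {..<NN}" by (rule permutes_inv[OF t])
  have A: "PM NN \<sigma> * FF \<in> carrier_mat NN NN" by (rule mult_carrier_mat[OF PM_carrier(1) FF_carrier])
  have E: "(PM NN \<sigma> * FF * mat_inv (PM NN \<tau>)) $$ (k,l) = Fent Ns (T (\<sigma> k)) (T (\<tau> l))"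
    if kl: "k < NN" "l < NN" for k l
  proof -
    have tl: "\<tau> l < NN" using permutes_in_image[OF t, of l] kl by simp
    have sk: "\<sigma> k < NN" using permutes_in_image[OF s, of k] kl by simp
    have "(PM NN \<sigma> * FF * mat_inv (PM NN \<tau>)) $$ (k,l) = (PM NN \<sigma> * FF) $$ (k, Hilbert_Choice.inv (Hilbert_Choice.inv \<tau>) l)"
      unfolding mat_inv_PM[OF t] by (rule PM_mult_right[OF ti A kl])
    also have "\<dots> = (PM NN \<sigma> * FF) $$ (k, \<tau> l)" by (simp only: permutes_inv_inv[OF t])
    also have "\<dots> = FF $$ (\<sigma> k, \<tau> l)" by (rule PM_mult_left[OF s FF_carrier kl(1) tl])
    also have "\<dots> = Fent Ns (T (\<sigma> k)) (T (\<tau> l))" by (rule FF_index[OF sk tl])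
    finally show ?thesis .
  qed
  have C: "PM NN \<sigma> * FF * mat_inv (PM NN \<tau>) \<in> carrier_mat NN NN"
    unfolding mat_inv_PM[OF t] by (rule mult_carrier_mat[OF A PM_carrier(1)])
  show ?thesis
  proof
    assume eq: "PM NN \<sigma> * FF * mat_inv (PM NN \<tau>) = FF"
    show "\<forall>k<NN. \<forall>l<NN. Fent Ns (T (\<sigma> k)) (T (\<tau> l)) = Fent Ns (T k) (T l)"
    proof (intro allI impI)
      fix k l assume kl: "k < NN" "l < NN"
      show "Fent Ns (T (\<sigma> k)) (T (\<tau> l)) = Fent Ns (T k) (T l)"
        using E[OF kl] FF_index[OF kl] eq by simp
    qed
  next
    assume H: "\<forall>k<NN. \<forall>l<NN. Fent Ns (T (\<sigma> k)) (T (\<tau> l)) = Fent Ns (T k) (T l)"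
    show "PM NN \<sigma> * FF * mat_inv (PM NN \<tau>) = FF"
    proof (rule eq_matI)
      fix k l assume "k < dim_row FF" "l < dim_col FF"
      then have kl: "k < NN" "l < NN" using FF_carrier by auto
      show "(PM NN \<sigma> * FF * mat_inv (PM NN \<tau>)) $$ (k,l) = FF $$ (k,l)"
        using E[OF kl] FF_index[OF kl] H kl by simp
    qed (use C FF_carrier in auto)
  qed
qed

definition sg :: "(nat list \<Rightarrow> nat list) \<Rightarrow> nat \<Rightarrow> nat" where
  "sg \<rho> = (\<lambda>k. if k < NN then Ti (\<rho> (T k)) else k)"

lemma sg_permutes:
  assumes "bij_betw \<rho> II II"
  shows "sg \<rho> permutes {..<NN}"
proof (rule bij_imp_permutes)
  have "bij_betw (Ti \<circ> (\<rho> \<circ> T)) {..<NN} {..<NN}"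
    by (rule bij_betw_trans[OF bij_betw_trans[OF bijT assms] bij_betw_the_inv_into[OF bijT]])
  then show "bij_betw (sg \<rho>) {..<NN} {..<NN}"
    by (rule bij_betw_cong[THEN iffD1, rotated]) (simp add: sg_def)
  show "\<And>x. x \<notin> {..<NN} \<Longrightarrow> sg \<rho> x = x" by (simp add: sg_def)
qed

lemma perm_mat_of_sg:
  assumes "bij_betw \<rho> II II"
  shows "perm_mat_of Ns \<rho> = PM NN (sg \<rho>)"
proof (rule eq_matI)
  fix k l assume "k < dim_row (PM NN (sg \<rho>))" "l < dim_col (PM NN (sg \<rho>))"
  then have kl: "k < NN" "l < NN" by auto
  have rI: "\<rho> (T k) \<in> II" using bij_betwE[OF assms] TI[OF kl(1)] by blast
  have "T l = \<rho> (T k) \<longleftrightarrow> Ti (\<rho> (T k)) = l"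
    using TTi[OF rI] TiT[OF kl(2)] by metis
  then show "perm_mat_of Ns \<rho> $$ (k, l) = PM NN (sg \<rho>) $$ (k, l)"
    using kl by (simp add: perm_mat_of_def PM_index sg_def)
qed (auto simp: perm_mat_of_def)

end



context FS begin

lemma T_sg:
  assumes "bij_betw \<rho> II II" "k < NN"
  shows "T (sg \<rho> k) = \<rho> (T k)"
proof -
  have "\<rho> (T k) \<in> II" using bij_betwE[OF assms(1)] TI[OF assms(2)] by blast
  then show ?thesis using assms(2) TTi by (simp add: sg_def)
qed

lemma set_sup:
  assumes aut: "is_aut Ns \<rho>"
  shows "is_perm_mat NN (perm_mat_of Ns \<rho>) \<and> is_perm_mat NN (transpose_mat (perm_mat_of Ns \<rho>)) \<and>
     perm_mat_of Ns \<rho> * FF * mat_inv (transpose_mat (perm_mat_of Ns \<rho>)) = FF"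
proof -
  have bij: "bij_betw \<rho> II II" using aut by (simp add: is_aut_def)
  define \<sigma> where "\<sigma> = sg \<rho>"
  have s: "\<sigma> permutes {..<NN}" unfolding \<sigma>_def by (rule sg_permutes[OF bij])
  have si: "Hilbert_Choice.inv \<sigma> permutes {..<NN}" by (rule permutes_inv[OF s])
  have P: "perm_mat_of Ns \<rho> = PM NN \<sigma>" unfolding \<sigma>_def by (rule perm_mat_of_sg[OF bij])
  have R: "transpose_mat (perm_mat_of Ns \<rho>) = PM NN (Hilbert_Choice.inv \<sigma>)"
    unfolding P by (rule transpose_PM[OF s])
  have Tsg: "T (\<sigma> x) = \<rho> (T x)" if "x < NN" for x unfolding \<sigma>_def by (rule T_sg[OF bij that])
  have H: "\<forall>k<NN. \<forall>l<NN. Fent Ns (T (\<sigma> k)) (T (Hilbert_Choice.inv \<sigma> l)) = Fent Ns (T k) (T l)"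
  proof (intro allI impI)
    fix k l assume k: "k < NN" and l: "l < NN"
    have il: "Hilbert_Choice.inv \<sigma> l < NN" using permutes_in_image[OF si, of l] l by simp
    have "T (\<sigma> k) = \<rho> (T k)" by (rule Tsg[OF k])
    moreover have "\<rho> (T (Hilbert_Choice.inv \<sigma> l)) = T l"
    proof -
      have "\<rho> (T (Hilbert_Choice.inv \<sigma> l)) = T (\<sigma> (Hilbert_Choice.inv \<sigma> l))"
        by (rule Tsg[OF il, symmetric])
      also have "\<dots> = T l" by (simp only: permutes_inverses(1)[OF s])
      finally show ?thesis .
    qed
    ultimately show "Fent Ns (T (\<sigma> k)) (T (Hilbert_Choice.inv \<sigma> l)) = Fent Ns (T k) (T l)"
      using aut_Fent[OF N1 cyc aut TI[OF k] TI[OF il]] by simp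
  qed
  show ?thesis unfolding R unfolding P
    using key[OF s si] H s si is_perm_mat_PM by blast
qed

lemma set_sub:
  assumes P: "is_perm_mat NN P" and R: "is_perm_mat NN R" and eq: "P * FF * mat_inv R = FF"
  shows "\<exists>\<rho>. P = perm_mat_of Ns \<rho> \<and> R = transpose_mat (perm_mat_of Ns \<rho>) \<and> is_aut Ns \<rho>"
proof -
  obtain \<sigma> where s: "\<sigma> permutes {..<NN}" "P = PM NN \<sigma>" using P is_perm_mat_PM by blast
  obtain \<tau> where t: "\<tau> permutes {..<NN}" "R = PM NN \<tau>" using R is_perm_mat_PM by blast
  have H: "\<forall>k<NN. \<forall>l<NN. Fent Ns (T (\<sigma> k)) (T (\<tau> l)) = Fent Ns (T k) (T l)"
    using key[OF s(1) t(1)] eq s(2) t(2) by blast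
  define \<alpha> where "\<alpha> = (\<lambda>t. T (\<sigma> (Ti t)))"
  define \<beta> where "\<beta> = (\<lambda>t. T (\<tau> (Ti t)))"
  have ba: "bij_betw \<alpha> II II"
  proof -
    have "bij_betw (T \<circ> (\<sigma> \<circ> Ti)) II II"
      by (rule bij_betw_trans[OF bij_betw_trans[OF bij_betw_the_inv_into[OF bijT] permutes_imp_bij[OF s(1)]] bijT])
    then show ?thesis unfolding \<alpha>_def by (simp add: comp_def)
  qed
  have bb: "bij_betw \<beta> II II"
  proof -
    have "bij_betw (T \<circ> (\<tau> \<circ> Ti)) II II"
      by (rule bij_betw_trans[OF bij_betw_trans[OF bij_betw_the_inv_into[OF bijT] permutes_imp_bij[OF t(1)]] bijT])
    then show ?thesis unfolding \<beta>_def by (simp add: comp_def)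
  qed
  have F: "Fent Ns (\<alpha> i) (\<beta> j) = Fent Ns i j" if i: "i \<in> II" and j: "j \<in> II" for i j
  proof -
    have "Fent Ns (T (\<sigma> (Ti i))) (T (\<tau> (Ti j))) = Fent Ns (T (Ti i)) (T (Ti j))"
      using H TiI[OF i] TiI[OF j] by blast
    then show ?thesis unfolding \<alpha>_def \<beta>_def using TTi[OF i] TTi[OF j] by simp
  qed
  obtain m where m: "\<forall>a\<in>II. \<alpha> a = tsmul Ns m a" "\<forall>j\<in>II. \<alpha> (\<beta> j) = j"
    using group_lemma[OF N1 cyc ba bb F] by blast
  have aut: "is_aut Ns \<alpha>" by (rule tsmul_aut[OF N1 ba m(1)])
  have sgs: "sg \<alpha> k = \<sigma> k" if k: "k < NN" for k
  proof -
    have sk: "\<sigma> k < NN" using permutes_in_image[OF s(1), of k] k by simp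
    show ?thesis using k unfolding sg_def \<alpha>_def by (simp add: TiT[OF k] TiT[OF sk])
  qed
  have Pe: "P = perm_mat_of Ns \<alpha>"
    unfolding s(2) perm_mat_of_sg[OF ba] by (rule PM_cong) (simp add: sgs)
  have tinv: "\<tau> k = Hilbert_Choice.inv \<sigma> k" if k: "k < NN" for k
  proof -
    have tk: "\<tau> k < NN" using permutes_in_image[OF t(1), of k] k by simp
    have stk: "\<sigma> (\<tau> k) < NN" using permutes_in_image[OF s(1), of "\<tau> k"] tk by simp
    have "\<alpha> (\<beta> (T k)) = T k" using m(2) TI[OF k] by blast
    then have "T (\<sigma> (\<tau> k)) = T k" unfolding \<alpha>_def \<beta>_def by (simp add: TiT[OF k] TiT[OF tk])
    then have "\<sigma> (\<tau> k) = k" using T_inj[OF stk k] by blast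
    then have "Hilbert_Choice.inv \<sigma> (\<sigma> (\<tau> k)) = Hilbert_Choice.inv \<sigma> k" by simp
    then show ?thesis by (simp only: permutes_inverses(2)[OF s(1)])
  qed
  have Re: "R = transpose_mat (perm_mat_of Ns \<alpha>)"
    unfolding Pe[symmetric] s(2) transpose_PM[OF s(1)] t(2) by (rule PM_cong) (simp add: tinv)
  show ?thesis using Pe Re aut by blast
qed

lemma set_eq:
  "{(P, R). is_perm_mat NN P \<and> is_perm_mat NN R \<and> P * FF * mat_inv R = FF}
   = {(perm_mat_of Ns \<rho>, transpose_mat (perm_mat_of Ns \<rho>)) | \<rho>. is_aut Ns \<rho>}"
proof
  show "{(P, R). is_perm_mat NN P \<and> is_perm_mat NN R \<and> P * FF * mat_inv R = FF}
    \<subseteq> {(perm_mat_of Ns \<rho>, transpose_mat (perm_mat_of Ns \<rho>)) | \<rho>. is_aut Ns \<rho>}"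
  proof
    fix x assume "x \<in> {(P, R). is_perm_mat NN P \<and> is_perm_mat NN R \<and> P * FF * mat_inv R = FF}"
    then obtain P R where x: "x = (P, R)" "is_perm_mat NN P" "is_perm_mat NN R" "P * FF * mat_inv R = FF"
      by blast
    obtain \<rho> where "P = perm_mat_of Ns \<rho>" "R = transpose_mat (perm_mat_of Ns \<rho>)" "is_aut Ns \<rho>"
      using set_sub[OF x(2-4)] by blast
    then show "x \<in> {(perm_mat_of Ns \<rho>, transpose_mat (perm_mat_of Ns \<rho>)) | \<rho>. is_aut Ns \<rho>}"
      using x(1) by blast
  qed
next
  show "{(perm_mat_of Ns \<rho>, transpose_mat (perm_mat_of Ns \<rho>)) | \<rho>. is_aut Ns \<rho>}
    \<subseteq> {(P, R). is_perm_mat NN P \<and> is_perm_mat NN R \<and> P * FF * mat_inv R = FF}"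
    using set_sup by blast
qed

end

theorem lemma4p9:
  fixes Ns :: "nat list"
  assumes "\<forall>x<length Ns. Ns ! x \<ge> 1"
    and "cyclic_I Ns"
  shows "(\<forall>\<rho>. is_aut Ns \<rho> \<longrightarrow> (\<forall>j\<in>I_F Ns. hFF Ns \<rho> j = \<rho> j))
     \<and> {(P, R). is_perm_mat (prod_list Ns) P \<and> is_perm_mat (prod_list Ns) R \<and>
          P * fourier_mat Ns * mat_inv R = fourier_mat Ns}
       = {(perm_mat_of Ns \<rho>, transpose_mat (perm_mat_of Ns \<rho>)) | \<rho>. is_aut Ns \<rho>}"
proof
  show "\<forall>\<rho>. is_aut Ns \<rho> \<longrightarrow> (\<forall>j\<in>I_F Ns. hFF Ns \<rho> j = \<rho> j)"
    using part1[OF assms] by blast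
  interpret FS Ns using assms by unfold_locales
  show "{(P, R). is_perm_mat (prod_list Ns) P \<and> is_perm_mat (prod_list Ns) R \<and>
          P * fourier_mat Ns * mat_inv R = fourier_mat Ns}
       = {(perm_mat_of Ns \<rho>, transpose_mat (perm_mat_of Ns \<rho>)) | \<rho>. is_aut Ns \<rho>}"
    by (rule set_eq)
qed


end
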